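(* Let $G$ be an oriented graph and let $a,b$ be positive integers. Then $\chi^*_o(G) \leq \frac{a}{b}$ if and only if there exist a positive integer $c$ and a consistent sub-orientation $\overrightarrow{KG}_{ac,bc}$ of the Kneser graph $KG_{ac,bc}$ such that $G$ admits a homomorphism to $\overrightarrow{KG}_{ac,bc}$.
   Context: An oriented graph is a finite directed graph with no directed cycle of length 1 or 2. For a set $S$ of $k$ colors let $P_b(S)$ be the set of $b$-element subsets of $S$. A $b$-fold oriented $k$-coloring of an oriented graph $G$ is a map $f: V(G) \to P_b(S)$ with $|S|=k$ such that (i) $f(x)\cap f(y)=\emptyset$ for every arc $xy$, and (ii) for all arcs $xy, zw$, $f(x)\cap f(w)\neq\emptyset$ implies $f(y)\cap f(z)=\emptyset$. The $b$-fold oriented chromatic number $\chi^b_o(G)$ is the minimum $k$ such that $G$ admits a $b$-fold oriented $k$-coloring, and the fractional oriented chromatic number is $\chi^*_o(G)=\lim_{b\to\infty}\chi^b_o(G)/b=\inf_{b\geq 1}\chi^b_o(G)/b$. A homomorphism of an oriented graph $G$ to an oriented graph $H$ is a map $f:V(G)\to V(H)$ such that $f(x)f(y)$ is an arc of $H$ whenever $xy$ is an arc of $G$. The Kneser graph $KG_{a,b}$ has the $b$-subsets of an $a$-set as vertices, two being adjacent iff they are disjoint. A consistent sub-orientation of $KG_{a,b}$ is an oriented graph $\overrightarrow{KG}_{a,b}$ whose underlying graph is a subgraph of $KG_{a,b}$ and such that for any two arcs $xy$ and $wz$, $x\cap z\neq\emptyset$ implies $y\cap w=\emptyset$. *)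

theory Defs
  imports Complex_Main
begin

definition oriented_graph :: "'a set \<Rightarrow> ('a \<times> 'a) set \<Rightarrow> bool" where
  "oriented_graph V A \<longleftrightarrow> finite V \<and> A \<subseteq> V \<times> V \<and> (\<forall>x. (x, x) \<notin> A)
     \<and> (\<forall>x y. (x, y) \<in> A \<longrightarrow> (y, x) \<notin> A)"

definition bfold_oriented_coloring ::
  "'a set \<Rightarrow> ('a \<times> 'a) set \<Rightarrow> nat \<Rightarrow> 'c set \<Rightarrow> ('a \<Rightarrow> 'c set) \<Rightarrow> bool" where
  "bfold_oriented_coloring V A b S f \<longleftrightarrow>
     (\<forall>x\<in>V. f x \<subseteq> S \<and> card (f x) = b)
   \<and> (\<forall>x y. (x, y) \<in> A \<longrightarrow> f x \<inter> f y = {})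
   \<and> (\<forall>x y z w. (x, y) \<in> A \<longrightarrow> (z, w) \<in> A \<longrightarrow> f x \<inter> f w \<noteq> {} \<longrightarrow> f y \<inter> f z = {})"

text \<open>b-fold oriented chromatic number: least k admitting a b-fold oriented k-coloring
  (colors drawn, w.l.o.g., from the naturals).\<close>
definition bfold_oriented_chromatic_number :: "'a set \<Rightarrow> ('a \<times> 'a) set \<Rightarrow> nat \<Rightarrow> nat" where
  "bfold_oriented_chromatic_number V A b =
     (LEAST k. \<exists>(S :: nat set) f. finite S \<and> card S = k \<and> bfold_oriented_coloring V A b S f)"

definition fractional_oriented_chromatic_number :: "'a set \<Rightarrow> ('a \<times> 'a) set \<Rightarrow> real" where
  "fractional_oriented_chromatic_number V A =
     (INF b \<in> {b::nat. 1 \<le> b}. real (bfold_oriented_chromatic_number V A b) / real b)"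

definition consistent_kneser_suborientation ::
  "nat \<Rightarrow> nat \<Rightarrow> nat set set \<Rightarrow> (nat set \<times> nat set) set \<Rightarrow> bool" where
  "consistent_kneser_suborientation a b W B \<longleftrightarrow>
     oriented_graph W B
   \<and> W \<subseteq> {s. s \<subseteq> {..<a} \<and> card s = b}
   \<and> (\<forall>x y. (x, y) \<in> B \<longrightarrow> x \<inter> y = {})
   \<and> (\<forall>x y w z. (x, y) \<in> B \<longrightarrow> (w, z) \<in> B \<longrightarrow> x \<inter> z \<noteq> {} \<longrightarrow> y \<inter> w = {})"

definition oriented_hom ::
  "'a set \<Rightarrow> ('a \<times> 'a) set \<Rightarrow> 'b set \<Rightarrow> ('b \<times> 'b) set \<Rightarrow> ('a \<Rightarrow> 'b) \<Rightarrow> bool" where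
  "oriented_hom V A W B h \<longleftrightarrow> (\<forall>x\<in>V. h x \<in> W) \<and> (\<forall>x y. (x, y) \<in> A \<longrightarrow> (h x, h y) \<in> B)"

end

theory Submission
  imports Defs
begin


lemma rat_sol:
  fixes x :: "'i \<Rightarrow> real"
  assumes "finite I"
  shows "(\<forall>(a,\<beta>)\<in>E. \<beta> \<in> \<rat> \<and> (\<forall>i\<in>I. a i \<in> \<rat>)) \<Longrightarrow> (\<forall>(a,\<beta>)\<in>E. (\<Sum>i\<in>I. a i * x i) = \<beta>)
     \<Longrightarrow> \<exists>y. (\<forall>i\<in>I. y i \<in> \<rat>) \<and> (\<forall>(a,\<beta>)\<in>E. (\<Sum>i\<in>I. a i * y i) = \<beta>)"
  using assms
proof (induction I arbitrary: E x rule: finite_induct)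
  case empty
  then show ?case by (intro exI[of _ "\<lambda>_. 0"]) auto
next
  case (insert j I)
  show ?case
  proof (cases "\<forall>(a,\<beta>)\<in>E. a j = 0")
    case True
    have "\<forall>(a,\<beta>)\<in>E. (\<Sum>i\<in>I. a i * x i) = \<beta>"
    proof clarify
      fix a \<beta> assume "(a,\<beta>)\<in>E"
      then show "(\<Sum>i\<in>I. a i * x i) = \<beta>" using insert.prems(2) True insert.hyps by fastforce
    qed
    moreover have "\<forall>(a,\<beta>)\<in>E. \<beta> \<in> \<rat> \<and> (\<forall>i\<in>I. a i \<in> \<rat>)" using insert.prems(1) by auto
    ultimately obtain y where y: "\<forall>i\<in>I. y i \<in> \<rat>" "\<forall>(a,\<beta>)\<in>E. (\<Sum>i\<in>I. a i * y i) = \<beta>"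
      using insert.IH by blast
    let ?y = "y(j := 0)"
    have s: "(\<Sum>i\<in>I. a i * ?y i) = (\<Sum>i\<in>I. a i * y i)" for a
      by (rule sum.cong) (use insert.hyps in auto)
    show ?thesis
      apply (rule exI[of _ ?y])
      using y True insert.hyps s by auto
  next
    case False
    then obtain a0 \<beta>0 where a0: "(a0,\<beta>0) \<in> E" "a0 j \<noteq> 0" by auto
    define E' where "E' = (\<lambda>(a,\<beta>). (\<lambda>i. a i - a j * a0 i / a0 j, \<beta> - a j * \<beta>0 / a0 j)) ` E"
    have sub: "(\<Sum>i\<in>I. (a i - a j * a0 i / a0 j) * z i) = (\<Sum>i\<in>I. a i * z i) - a j / a0 j * (\<Sum>i\<in>I. a0 i * z i)"
      for a :: "'i \<Rightarrow> real" and z :: "'i \<Rightarrow> real"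
    proof -
      have "(\<Sum>i\<in>I. (a i - a j * a0 i / a0 j) * z i) = (\<Sum>i\<in>I. a i * z i - a j / a0 j * (a0 i * z i))"
        by (rule sum.cong) (auto simp: algebra_simps)
      then show ?thesis by (simp add: sum_subtractf sum_distrib_left)
    qed
    have rat': "\<forall>(a,\<beta>)\<in>E'. \<beta> \<in> \<rat> \<and> (\<forall>i\<in>I. a i \<in> \<rat>)"
    proof -
      have "\<beta> - a j * \<beta>0 / a0 j \<in> \<rat> \<and> (\<forall>i\<in>I. a i - a j * a0 i / a0 j \<in> \<rat>)" if "(a,\<beta>)\<in>E" for a \<beta>
        using insert.prems(1) that a0(1) by (fastforce intro!: Rats_diff Rats_mult Rats_divide)
      then show ?thesis unfolding E'_def by auto
    qed
    have sx: "(\<Sum>i\<in>I. a i * x i) = \<beta> - a j * x j" if "(a,\<beta>)\<in>E" for a \<beta>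
      using insert.prems(2) that insert.hyps by auto
    have sol': "\<forall>(a,\<beta>)\<in>E'. (\<Sum>i\<in>I. a i * x i) = \<beta>"
    proof -
      have "(\<Sum>i\<in>I. (a i - a j * a0 i / a0 j) * x i) = \<beta> - a j * \<beta>0 / a0 j" if "(a,\<beta>)\<in>E" for a \<beta>
        unfolding sub sx[OF that] sx[OF a0(1)] using a0(2) by (simp add: field_simps)
      then show ?thesis unfolding E'_def by auto
    qed
    obtain y where y: "\<forall>i\<in>I. y i \<in> \<rat>" "\<forall>(a,\<beta>)\<in>E'. (\<Sum>i\<in>I. a i * y i) = \<beta>"
      using insert.IH[OF rat' sol'] by blast
    define y' where "y' = y(j := (\<beta>0 - (\<Sum>i\<in>I. a0 i * y i)) / a0 j)"
    have s: "(\<Sum>i\<in>I. a i * y' i) = (\<Sum>i\<in>I. a i * y i)" for a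
      unfolding y'_def by (rule sum.cong) (use insert.hyps in auto)
    have ey: "(\<Sum>i\<in>I. a i * y i) = \<beta> - a j * \<beta>0 / a0 j + a j / a0 j * (\<Sum>i\<in>I. a0 i * y i)" if "(a,\<beta>)\<in>E" for a \<beta>
    proof -
      have "(\<Sum>i\<in>I. (a i - a j * a0 i / a0 j) * y i) = \<beta> - a j * \<beta>0 / a0 j"
        using y(2) that unfolding E'_def by auto
      then show ?thesis unfolding sub by simp
    qed
    show ?thesis
    proof (intro exI[of _ y'] conjI)
      show "\<forall>i\<in>insert j I. y' i \<in> \<rat>"
        using y insert.prems(1) a0 insert.hyps unfolding y'_def
        by (auto intro!: Rats_diff Rats_divide Rats_sum Rats_mult)
      show "\<forall>(a,\<beta>)\<in>E. (\<Sum>i\<in>insert j I. a i * y' i) = \<beta>"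
      proof (clarify)
        fix a \<beta> assume ab: "(a,\<beta>)\<in>E"
        have "(\<Sum>i\<in>insert j I. a i * y' i) = a j * y' j + (\<Sum>i\<in>I. a i * y i)"
          using insert.hyps s by simp
        also have "\<dots> = \<beta>" unfolding ey[OF ab] y'_def using a0(2) by (simp add: field_simps)
        finally show "(\<Sum>i\<in>insert j I. a i * y' i) = \<beta>" .
      qed
    qed
  qed
qed

definition lin :: "'i set \<Rightarrow> ('i \<Rightarrow> real) \<Rightarrow> ('i \<Rightarrow> real) \<Rightarrow> real" where
  "lin I a w = (\<Sum>i\<in>I. a i * w i)"

definition lpf :: "'i set \<Rightarrow> (('i \<Rightarrow> real) \<times> real) set \<Rightarrow> ('i \<Rightarrow> real) \<Rightarrow> bool" where
  "lpf I C w \<longleftrightarrow> (\<forall>i. i \<notin> I \<longrightarrow> w i = 0) \<and> (\<forall>i\<in>I. 0 \<le> w i) \<and> (\<forall>p\<in>C. snd p \<le> lin I (fst p) w)"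

definition tC :: "'i set \<Rightarrow> (('i \<Rightarrow> real) \<times> real) set \<Rightarrow> ('i \<Rightarrow> real) \<Rightarrow> (('i \<Rightarrow> real) \<times> real) set" where
  "tC I C w = {p\<in>C. lin I (fst p) w = snd p}"

definition zI :: "'i set \<Rightarrow> ('i \<Rightarrow> real) \<Rightarrow> 'i set" where
  "zI I w = {i\<in>I. w i = 0}"

definition kern :: "'i set \<Rightarrow> (('i \<Rightarrow> real) \<times> real) set \<Rightarrow> ('i \<Rightarrow> real) \<Rightarrow> ('i \<Rightarrow> real) \<Rightarrow> bool" where
  "kern I C w d \<longleftrightarrow> (\<forall>i. i \<notin> I \<longrightarrow> d i = 0) \<and> (\<forall>i\<in>zI I w. d i = 0) \<and> (\<forall>p\<in>tC I C w. lin I (fst p) d = 0)"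

definition vtx :: "'i set \<Rightarrow> (('i \<Rightarrow> real) \<times> real) set \<Rightarrow> ('i \<Rightarrow> real) \<Rightarrow> bool" where
  "vtx I C w \<longleftrightarrow> lpf I C w \<and> (\<forall>d. kern I C w d \<longrightarrow> d = (\<lambda>_. 0))"

lemma lin_step: "lin I a (\<lambda>i. w i + t * d i) = lin I a w + t * lin I a d"
  unfolding lin_def by (simp add: algebra_simps sum.distrib sum_distrib_left)

lemma lin_neg: "lin I a (\<lambda>i. - d i) = - lin I a d"
  unfolding lin_def by (simp add: sum_negf)

lemma kern_neg: "kern I C w d \<Longrightarrow> kern I C w (\<lambda>i. - d i)"
  unfolding kern_def by (auto simp: lin_neg)

lemma lp_step:
  fixes I :: "'i set"
  assumes fI: "finite I" and fC: "finite C" and f: "lpf I C w" and k: "kern I C w d" and d0: "d \<noteq> (\<lambda>_. 0)"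
  shows "\<exists>w'. lpf I C w' \<and> sum w' I \<le> sum w I \<and> tC I C w \<subseteq> tC I C w' \<and> zI I w \<subseteq> zI I w'
     \<and> (tC I C w \<noteq> tC I C w' \<or> zI I w \<noteq> zI I w')"
proof -
  have "\<exists>e. kern I C w e \<and> sum e I \<le> 0 \<and> (\<exists>i\<in>I. e i < 0)"
  proof -
    obtain i0 where i0: "d i0 \<noteq> 0" using d0 by auto
    have i0I: "i0 \<in> I" using k i0 unfolding kern_def by auto
    have neg: "\<exists>i\<in>I. e i < 0" if "sum e I < 0" for e :: "'i \<Rightarrow> real"
    proof (rule ccontr)
      assume "\<not> ?thesis"
      then have "0 \<le> sum e I" by (auto intro!: sum_nonneg simp: not_less)
      then show False using that by simp
    qed
    have sn: "sum (\<lambda>i. - d i) I = - sum d I" by (simp add: sum_negf)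
    consider "sum d I < 0" | "sum d I > 0" | "sum d I = 0" by linarith
    then show ?thesis
    proof cases
      case 1 then show ?thesis using k neg by (intro exI[of _ d]) auto
    next
      case 2 then show ?thesis using kern_neg[OF k] neg[of "\<lambda>i. - d i"] sn
        by (intro exI[of _ "\<lambda>i. - d i"]) auto
    next
      case 3
      show ?thesis
      proof (cases "\<exists>i\<in>I. d i < 0")
        case True then show ?thesis using k 3 by (intro exI[of _ d]) auto
      next
        case False
        then have "d i0 > 0" using i0 i0I by force
        then show ?thesis using kern_neg[OF k] 3 sn i0I
          by (intro exI[of _ "\<lambda>i. - d i"]) auto
      qed
    qed
  qed
  then obtain e where ke: "kern I C w e" and se: "sum e I \<le> 0" and en: "\<exists>i\<in>I. e i < 0" by blast
  define R1 where "R1 = (\<lambda>i. w i / - e i) ` {i\<in>I. e i < 0}"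
  define R2 where "R2 = (\<lambda>p. (lin I (fst p) w - snd p) / - lin I (fst p) e) ` {p\<in>C. lin I (fst p) e < 0}"
  define t where "t = Min (R1 \<union> R2)"
  have finR: "finite (R1 \<union> R2)" unfolding R1_def R2_def using fI fC by auto
  have neR: "R1 \<union> R2 \<noteq> {}" unfolding R1_def using en by auto
  have tle1: "t \<le> w i / - e i" if "i \<in> I" "e i < 0" for i
    unfolding t_def using finR that by (intro Min_le) (auto simp: R1_def)
  have tle2: "t \<le> (lin I (fst p) w - snd p) / - lin I (fst p) e" if "p \<in> C" "lin I (fst p) e < 0" for p
    unfolding t_def using finR that by (intro Min_le) (auto simp: R2_def)
  have fw: "\<forall>i. i \<notin> I \<longrightarrow> w i = 0" "\<forall>i\<in>I. 0 \<le> w i" "\<forall>p\<in>C. snd p \<le> lin I (fst p) w"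
    using f unfolding lpf_def by auto
  have t0: "0 \<le> t"
  proof -
    have "t \<in> R1 \<union> R2" unfolding t_def using finR neR by (rule Min_in)
    then show ?thesis unfolding R1_def R2_def using fw by (force intro: divide_nonneg_neg)
  qed
  define w' where "w' = (\<lambda>i. w i + t * e i)"
  have ek: "\<forall>i. i \<notin> I \<longrightarrow> e i = 0" "\<forall>i\<in>zI I w. e i = 0" "\<forall>p\<in>tC I C w. lin I (fst p) e = 0"
    using ke unfolding kern_def by auto
  have f': "lpf I C w'"
    unfolding lpf_def
  proof (intro conjI ballI allI impI)
    fix i assume "i \<notin> I" then show "w' i = 0" using fw ek unfolding w'_def by auto
  next
    fix i assume iI: "i \<in> I"
    show "0 \<le> w' i"
    proof (cases "e i < 0")
      case True
      have pos: "0 < - e i" using True by simp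
      have "t * (- e i) \<le> w i" using tle1[OF iI True] by (simp only: pos_le_divide_eq[OF pos])
      then show ?thesis unfolding w'_def by simp
    next
      case False then show ?thesis unfolding w'_def using fw iI t0 by simp
    qed
  next
    fix p assume pC: "p \<in> C"
    show "snd p \<le> lin I (fst p) w'"
    proof (cases "lin I (fst p) e < 0")
      case True
      have pos: "0 < - lin I (fst p) e" using True by simp
      have "t * (- lin I (fst p) e) \<le> lin I (fst p) w - snd p"
        using tle2[OF pC True] by (simp only: pos_le_divide_eq[OF pos])
      then show ?thesis unfolding w'_def lin_step by simp
    next
      case False
      then have "0 \<le> t * lin I (fst p) e" using t0 by simp
      then show ?thesis unfolding w'_def lin_step using fw pC by force
    qed
  qed
  have sw: "sum w' I \<le> sum w I"
    unfolding w'_def using se t0 by (simp add: sum.distrib sum_distrib_left[symmetric] mult_nonneg_nonpos)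
  have tsub: "tC I C w \<subseteq> tC I C w'"
    unfolding tC_def w'_def lin_step using ek by (auto simp: tC_def)
  have zsub: "zI I w \<subseteq> zI I w'"
    unfolding w'_def using ek by (auto simp: zI_def)
  have new: "tC I C w \<noteq> tC I C w' \<or> zI I w \<noteq> zI I w'"
  proof -
    have "t \<in> R1 \<union> R2" unfolding t_def using finR neR by (rule Min_in)
    then show ?thesis
    proof
      assume "t \<in> R1"
      then obtain i where i: "i \<in> I" "e i < 0" "t = w i / - e i" unfolding R1_def by auto
      have "i \<notin> zI I w" using i ek by auto
      moreover have "i \<in> zI I w'" using i unfolding w'_def zI_def by (auto simp: field_simps)
      ultimately show ?thesis by auto
    next
      assume "t \<in> R2"
      then obtain p where p: "p \<in> C" "lin I (fst p) e < 0" "t = (lin I (fst p) w - snd p) / - lin I (fst p) e"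
        unfolding R2_def by auto
      have "p \<notin> tC I C w" using p ek by auto
      moreover have "p \<in> tC I C w'" using p unfolding w'_def tC_def lin_step by (auto simp: field_simps)
      ultimately show ?thesis by auto
    qed
  qed
  show ?thesis using f' sw tsub zsub new by blast
qed




lemma to_vtx:
  fixes I :: "'i set"
  assumes fI: "finite I" and fC: "finite C"
  shows "lpf I C w \<Longrightarrow> \<exists>v. vtx I C v \<and> sum v I \<le> sum w I"
proof (induction w rule: measure_induct_rule[where f = "\<lambda>w. card C + card I - (card (tC I C w) + card (zI I w))"])
  case (less w)
  show ?case
  proof (cases "vtx I C w")
    case True then show ?thesis by auto
  next
    case False
    then obtain d where k: "kern I C w d" and d0: "d \<noteq> (\<lambda>_. 0)" using less.prems unfolding vtx_def by auto
    obtain w' where w': "lpf I C w'" "sum w' I \<le> sum w I" "tC I C w \<subseteq> tC I C w'" "zI I w \<subseteq> zI I w'"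
      "tC I C w \<noteq> tC I C w' \<or> zI I w \<noteq> zI I w'"
      using lp_step[OF fI fC less.prems k d0] by blast
    have sC: "tC I C w' \<subseteq> C" unfolding tC_def by auto
    have sI: "zI I w' \<subseteq> I" unfolding zI_def by auto
    have c1: "card (tC I C w) \<le> card (tC I C w')" using w'(3) sC fC by (meson card_mono finite_subset)
    have c2: "card (zI I w) \<le> card (zI I w')" using w'(4) sI fI by (meson card_mono finite_subset)
    have c3: "card (tC I C w') \<le> card C" using sC fC by (rule card_mono[rotated])
    have c4: "card (zI I w') \<le> card I" using sI fI by (rule card_mono[rotated])
    have "card (tC I C w) < card (tC I C w') \<or> card (zI I w) < card (zI I w')"
      using w'(3,4,5) sC sI fC fI by (metis finite_subset psubsetI psubset_card_mono)
    then have "card C + card I - (card (tC I C w') + card (zI I w')) < card C + card I - (card (tC I C w) + card (zI I w))"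
      using c1 c2 c3 c4 by linarith
    then obtain v where "vtx I C v" "sum v I \<le> sum w' I" using less.IH w'(1) by blast
    then show ?thesis using w'(2) by auto
  qed
qed

lemma vtx_unique:
  assumes "vtx I C v1" "vtx I C v2" "tC I C v1 = tC I C v2" "zI I v1 = zI I v2"
  shows "v1 = v2"
proof -
  have "kern I C v1 (\<lambda>i. v1 i - v2 i)"
    unfolding kern_def
  proof (intro conjI allI impI ballI)
    fix i assume "i \<notin> I" then show "v1 i - v2 i = 0" using assms(1,2) unfolding vtx_def lpf_def by auto
  next
    fix i assume "i \<in> zI I v1" then show "v1 i - v2 i = 0" using assms(4) unfolding zI_def by auto
  next
    fix p assume p: "p \<in> tC I C v1"
    then have "lin I (fst p) v1 = snd p" "lin I (fst p) v2 = snd p" using assms(3) unfolding tC_def by auto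
    then show "lin I (fst p) (\<lambda>i. v1 i - v2 i) = 0" unfolding lin_def by (simp add: right_diff_distrib sum_subtractf)
  qed
  then have "(\<lambda>i. v1 i - v2 i) = (\<lambda>_. 0)" using assms(1) unfolding vtx_def by blast
  then have "v1 i - v2 i = 0" for i by (metis (mono_tags))
  then show ?thesis by auto
qed

lemma finite_vtx:
  assumes "finite I" "finite C"
  shows "finite {v. vtx I C v}"
proof (rule finite_imageD)
  show "inj_on (\<lambda>v. (tC I C v, zI I v)) {v. vtx I C v}"
  proof (rule inj_onI)
    fix x y assume "x \<in> {v. vtx I C v}" "y \<in> {v. vtx I C v}" "(tC I C x, zI I x) = (tC I C y, zI I y)"
    then show "x = y" using vtx_unique[of I C x y] by auto
  qed
  have "(\<lambda>v. (tC I C v, zI I v)) ` {v. vtx I C v} \<subseteq> Pow C \<times> Pow I"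
    by (auto simp: tC_def zI_def)
  then show "finite ((\<lambda>v. (tC I C v, zI I v)) ` {v. vtx I C v})"
    using assms by (meson finite_Pow_iff finite_SigmaI finite_subset)
qed

lemma vtx_rat:
  fixes I :: "'i set"
  assumes fI: "finite I" and rat: "\<forall>p\<in>C. snd p \<in> \<rat> \<and> (\<forall>i\<in>I. fst p i \<in> \<rat>)" and v: "vtx I C v"
  shows "v i \<in> \<rat>"
proof -
  define E where "E = tC I C v \<union> (\<lambda>j. (\<lambda>i. if i = j then 1 else 0, 0::real)) ` zI I v"
  have rE: "\<forall>(a,\<beta>)\<in>E. \<beta> \<in> \<rat> \<and> (\<forall>i\<in>I. a i \<in> \<rat>)"
    using rat unfolding E_def tC_def by auto
  have ind: "(\<Sum>i\<in>I. (if i = j then 1 else 0) * z i) = z j" if "j \<in> I" for j and z :: "'i \<Rightarrow> real"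
  proof -
    have "(\<Sum>i\<in>I. (if i = j then 1 else 0) * z i) = (\<Sum>i\<in>I. if i = j then z i else 0)"
      by (rule sum.cong) auto
    then show ?thesis using fI that by simp
  qed
  have sE: "\<forall>(a,\<beta>)\<in>E. (\<Sum>i\<in>I. a i * v i) = \<beta>"
    unfolding E_def using ind by (auto simp: tC_def zI_def lin_def)
  obtain y where y: "\<forall>i\<in>I. y i \<in> \<rat>" "\<forall>(a,\<beta>)\<in>E. (\<Sum>i\<in>I. a i * y i) = \<beta>"
    using rat_sol[OF fI rE sE] by blast
  define q where "q = (\<lambda>i. if i \<in> I then y i else 0)"
  have lq: "lin I a q = (\<Sum>i\<in>I. a i * y i)" for a unfolding lin_def q_def by (rule sum.cong) auto
  have "kern I C v (\<lambda>i. v i - q i)"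
    unfolding kern_def
  proof (intro conjI allI impI ballI)
    fix i assume "i \<notin> I" then show "v i - q i = 0" using v unfolding vtx_def lpf_def q_def by auto
  next
    fix i assume i: "i \<in> zI I v"
    then have "((\<lambda>j. if j = i then 1 else 0), 0::real) \<in> E" unfolding E_def by blast
    then have "(\<Sum>j\<in>I. (if j = i then 1 else 0) * y j) = 0" using y(2) by fastforce
    then show "v i - q i = 0" using i ind[of i y] unfolding zI_def q_def by auto
  next
    fix p assume p: "p \<in> tC I C v"
    then have "lin I (fst p) v = snd p" unfolding tC_def by auto
    moreover have "lin I (fst p) q = snd p"
    proof -
      have "p \<in> E" using p unfolding E_def by blast
      then show ?thesis using y(2) unfolding lq by (cases p) fastforce
    qed
    ultimately show "lin I (fst p) (\<lambda>i. v i - q i) = 0" unfolding lin_def by (simp add: right_diff_distrib sum_subtractf)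
  qed
  then have "(\<lambda>i. v i - q i) = (\<lambda>_. 0)" using v unfolding vtx_def by blast
  then have "v i - q i = 0" by (metis (mono_tags))
  then have "v i = q i" by simp
  then show ?thesis using y(1) unfolding q_def by auto
qed

lemma lp_main:
  fixes I :: "'i set"
  assumes fI: "finite I" and fC: "finite C" and rat: "\<forall>p\<in>C. snd p \<in> \<rat> \<and> (\<forall>i\<in>I. fst p i \<in> \<rat>)"
    and w: "lpf I C w"
  shows "\<exists>v. lpf I C v \<and> (\<forall>i. v i \<in> \<rat>) \<and> (\<forall>w. lpf I C w \<longrightarrow> sum v I \<le> sum w I)"
proof -
  let ?VS = "{v. vtx I C v}"
  have fin: "finite ?VS" using finite_vtx[OF fI fC] .
  obtain v1 where "vtx I C v1" using to_vtx[OF fI fC w] by blast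
  then have ne: "?VS \<noteq> {}" by auto
  obtain v0 where v0: "v0 \<in> ?VS" "\<forall>v\<in>?VS. sum v0 I \<le> sum v I"
  proof -
    let ?m = "Min ((\<lambda>v. sum v I) ` ?VS)"
    have "?m \<in> (\<lambda>v. sum v I) ` ?VS" using fin ne by (intro Min_in) auto
    then obtain v0 where "v0 \<in> ?VS" "sum v0 I = ?m" by auto
    moreover have "\<forall>v\<in>?VS. ?m \<le> sum v I" using fin by auto
    ultimately show ?thesis using that by auto
  qed
  show ?thesis
  proof (intro exI[of _ v0] conjI allI impI)
    show "lpf I C v0" using v0 unfolding vtx_def by auto
    fix i show "v0 i \<in> \<rat>" using vtx_rat[OF fI rat] v0 by auto
  next
    fix w assume "lpf I C w"
    then obtain v where "vtx I C v" "sum v I \<le> sum w I" using to_vtx[OF fI fC] by blast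
    then show "sum v0 I \<le> sum w I" using v0 by force
  qed
qed




definition comp :: "('a \<times> 'a) set \<Rightarrow> 'a set \<Rightarrow> 'a set \<Rightarrow> bool" where
  "comp A U U' \<longleftrightarrow> (\<forall>x y z w. (x,y)\<in>A \<longrightarrow> (z,w)\<in>A \<longrightarrow> x\<in>U \<longrightarrow> w\<in>U \<longrightarrow> y\<in>U' \<longrightarrow> z\<in>U' \<longrightarrow> False)"

definition good :: "'a set \<Rightarrow> ('a \<times> 'a) set \<Rightarrow> 'a set set \<Rightarrow> bool" where
  "good V A F \<longleftrightarrow> F \<subseteq> Pow V \<and> (\<forall>U\<in>F. \<forall>U'\<in>F. comp A U U')"

definition CV :: "'a set \<Rightarrow> (('a set \<Rightarrow> real) \<times> real) set" where
  "CV V = (\<lambda>x. (\<lambda>U. if x \<in> U then 1 else 0, 1)) ` V"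

lemma lin_CV: "finite F \<Longrightarrow> lin F (\<lambda>U. if x \<in> U then 1 else 0) w = sum w {U\<in>F. x\<in>U}"
proof -
  assume f: "finite F"
  have "lin F (\<lambda>U. if x \<in> U then 1 else 0) w = (\<Sum>U\<in>F. if x \<in> U then w U else 0)"
    unfolding lin_def by (rule sum.cong) auto
  then show ?thesis using f by (simp add: sum.inter_filter)
qed

lemma CV_rat: "\<forall>p\<in>CV V. snd p \<in> \<rat> \<and> (\<forall>i\<in>I. fst p i \<in> \<rat>)"
  unfolding CV_def by auto

lemma col_transfer:
  assumes c: "bfold_oriented_coloring V A b S f" and AV: "A \<subseteq> V \<times> V" and inj: "inj_on \<phi> S"
  shows "bfold_oriented_coloring V A b (\<phi> ` S) (\<lambda>x. \<phi> ` f x)"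
proof -
  have fS: "\<And>x. x \<in> V \<Longrightarrow> f x \<subseteq> S" and cd: "\<And>x. x \<in> V \<Longrightarrow> card (f x) = b"
    using c unfolding bfold_oriented_coloring_def by auto
  have int: "\<phi> ` f x \<inter> \<phi> ` f y = \<phi> ` (f x \<inter> f y)" if "x \<in> V" "y \<in> V" for x y
    using inj_on_image_Int[OF inj fS[OF that(1)] fS[OF that(2)]] by simp
  have ci: "card (\<phi> ` f x) = b" if "x \<in> V" for x
    using card_image[OF inj_on_subset[OF inj fS[OF that]]] cd[OF that] by simp
  show ?thesis
    unfolding bfold_oriented_coloring_def
  proof (intro conjI allI impI ballI)
    fix x assume x: "x \<in> V"
    show "\<phi> ` f x \<subseteq> \<phi> ` S" using fS[OF x] by auto
    show "card (\<phi> ` f x) = b" using ci[OF x] .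
  next
    fix x y assume a: "(x,y) \<in> A"
    then have "x \<in> V" "y \<in> V" using AV by auto
    then show "\<phi> ` f x \<inter> \<phi> ` f y = {}" using int c a unfolding bfold_oriented_coloring_def by auto
  next
    fix x y z w assume a: "(x,y) \<in> A" "(z,w) \<in> A" "\<phi> ` f x \<inter> \<phi> ` f w \<noteq> {}"
    then have v: "x \<in> V" "y \<in> V" "z \<in> V" "w \<in> V" using AV by auto
    then have "f x \<inter> f w \<noteq> {}" using a(3) int by auto
    then have "f y \<inter> f z = {}" using c a(1,2) unfolding bfold_oriented_coloring_def by blast
    then show "\<phi> ` f y \<inter> \<phi> ` f z = {}" using int v by auto
  qed
qed

lemma chi_le:
  fixes S :: "'c set"
  assumes c: "bfold_oriented_coloring V A b S f" and fS: "finite S" and AV: "A \<subseteq> V \<times> V"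
  shows "bfold_oriented_chromatic_number V A b \<le> card S
    \<and> (\<exists>(S'::nat set) f'. finite S' \<and> card S' = bfold_oriented_chromatic_number V A b \<and> bfold_oriented_coloring V A b S' f')"
proof -
  obtain \<phi> where \<phi>: "bij_betw \<phi> S {0..<card S}" using ex_bij_betw_finite_nat[OF fS] by blast
  have "bfold_oriented_coloring V A b (\<phi> ` S) (\<lambda>x. \<phi> ` f x)"
    using col_transfer[OF c AV] \<phi> unfolding bij_betw_def by blast
  moreover have "\<phi> ` S = {0..<card S}" using \<phi> unfolding bij_betw_def by blast
  ultimately have ex: "\<exists>(S'::nat set) f'. finite S' \<and> card S' = card S \<and> bfold_oriented_coloring V A b S' f'"
    by (intro exI[of _ "{0..<card S}"]) auto
  show ?thesis
    unfolding bfold_oriented_chromatic_number_def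
    using Least_le[of "\<lambda>k. \<exists>(S'::nat set) f'. finite S' \<and> card S' = k \<and> bfold_oriented_coloring V A b S' f'", OF ex]
      LeastI_ex[of "\<lambda>k. \<exists>(S'::nat set) f'. finite S' \<and> card S' = k \<and> bfold_oriented_coloring V A b S' f'"] ex
    by blast
qed

lemma col_exists:
  assumes "oriented_graph V A"
  shows "bfold_oriented_coloring V A b (V \<times> {..<b}) (\<lambda>x. {x} \<times> {..<b})"
  using assms unfolding bfold_oriented_coloring_def oriented_graph_def
  by (auto simp: card_cartesian_product)




lemma lower:
  fixes S :: "'c set" and V :: "'a set"
  assumes c: "bfold_oriented_coloring V A b S f" and fS: "finite S" and fV: "finite V" and b: "0 < b"
  shows "\<exists>F w. good V A F \<and> lpf F (CV V) w \<and> sum w F = real (card S) / real b"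
proof -
  have fxS: "\<And>x. x \<in> V \<Longrightarrow> f x \<subseteq> S" and cd: "\<And>x. x \<in> V \<Longrightarrow> card (f x) = b"
    using c unfolding bfold_oriented_coloring_def by auto
  define cl where "cl i = {x\<in>V. i \<in> f x}" for i
  define F where "F = cl ` S"
  define w where "w U = (if U \<in> F then real (card {i\<in>S. cl i = U}) / real b else 0)" for U
  have fF: "finite F" unfolding F_def using fS by auto
  have good: "good V A F"
    unfolding good_def comp_def
  proof (intro conjI ballI allI impI)
    show "F \<subseteq> Pow V" unfolding F_def cl_def by auto
  next
    fix U U' x y z w' assume U: "U \<in> F" "U' \<in> F" and a: "(x,y)\<in>A" "(z,w')\<in>A" and m: "x\<in>U" "w'\<in>U" "y\<in>U'" "z\<in>U'"
    obtain i j where "i \<in> S" "j \<in> S" "U = cl i" "U' = cl j" using U unfolding F_def by auto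
    then have "i \<in> f x \<inter> f w'" "j \<in> f y \<inter> f z" using m unfolding cl_def by auto
    then show False using c a unfolding bfold_oriented_coloring_def by blast
  qed
  have cnt: "(\<Sum>U\<in>{U\<in>F. x\<in>U}. card {i\<in>S. cl i = U}) = card (f x)" if x: "x \<in> V" for x
  proof -
    define S' where "S' = {i\<in>S. x \<in> cl i}"
    have fS': "finite S'" unfolding S'_def using fS by auto
    have "card S' = (\<Sum>U\<in>cl ` S'. sum (\<lambda>_. 1::nat) {i\<in>S'. cl i = U})"
      using sum.image_gen[OF fS', of "\<lambda>_. 1::nat" cl] by simp
    also have "\<dots> = (\<Sum>U\<in>{U\<in>F. x\<in>U}. card {i\<in>S. cl i = U})"
    proof -
      have "cl ` S' = {U\<in>F. x\<in>U}" unfolding S'_def F_def by auto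
      moreover have "sum (\<lambda>_. 1::nat) {i\<in>S'. cl i = U} = card {i\<in>S. cl i = U}" if "U \<in> {U\<in>F. x\<in>U}" for U
        using that unfolding S'_def by (auto intro!: arg_cong[where f=card])
      ultimately show ?thesis by (auto intro!: sum.cong)
    qed
    finally have "card S' = (\<Sum>U\<in>{U\<in>F. x\<in>U}. card {i\<in>S. cl i = U})" .
    moreover have "S' = f x" unfolding S'_def cl_def using fxS[OF x] x by auto
    ultimately show ?thesis by simp
  qed
  have lp: "lpf F (CV V) w"
    unfolding lpf_def
  proof (intro conjI allI impI ballI)
    fix U assume "U \<notin> F" then show "w U = 0" unfolding w_def by auto
  next
    fix U assume "U \<in> F" then show "0 \<le> w U" unfolding w_def by auto
  next
    fix p assume "p \<in> CV V"
    then obtain x where x: "x \<in> V" "p = (\<lambda>U. if x \<in> U then 1 else 0, 1)" unfolding CV_def by auto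
    have "lin F (fst p) w = sum w {U\<in>F. x\<in>U}" using x lin_CV[OF fF] by simp
    also have "\<dots> = (\<Sum>U\<in>{U\<in>F. x\<in>U}. real (card {i\<in>S. cl i = U}) / real b)"
      unfolding w_def by (rule sum.cong) auto
    also have "\<dots> = real (\<Sum>U\<in>{U\<in>F. x\<in>U}. card {i\<in>S. cl i = U}) / real b"
      by (simp add: sum_divide_distrib)
    also have "\<dots> = 1" using cnt[OF x(1)] cd[OF x(1)] b by simp
    finally show "snd p \<le> lin F (fst p) w" using x by simp
  qed
  have "sum w F = (\<Sum>U\<in>F. real (card {i\<in>S. cl i = U}) / real b)"
    unfolding w_def by (rule sum.cong) auto
  also have "\<dots> = real (\<Sum>U\<in>F. card {i\<in>S. cl i = U}) / real b"
    by (simp add: sum_divide_distrib)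
  also have "(\<Sum>U\<in>F. card {i\<in>S. cl i = U}) = card S"
    using sum.image_gen[OF fS, of "\<lambda>_. 1::nat" cl] unfolding F_def by simp
  finally show ?thesis using good lp by blast
qed

lemma common_denom:
  fixes v :: "'i \<Rightarrow> real"
  assumes "finite F"
  shows "(\<forall>U\<in>F. v U \<in> \<rat>) \<Longrightarrow> \<exists>D::nat. 0 < D \<and> (\<forall>U\<in>F. \<exists>n::int. real D * v U = of_int n)"
  using assms
proof (induction F rule: finite_induct)
  case empty then show ?case by (intro exI[of _ 1]) auto
next
  case (insert U F)
  obtain D where D: "0 < D" "\<forall>U\<in>F. \<exists>n::int. real D * v U = of_int n" using insert by auto
  obtain p r where pr: "r > 0" "v U = of_int p / of_int r" using insert.prems(1) Rats_cases' by (metis insertI1)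
  define D' where "D' = D * nat r"
  have "real D' = real D * of_int r" unfolding D'_def using pr(1) by simp
  show ?case
  proof (intro exI[of _ D'] conjI ballI)
    show "0 < D'" unfolding D'_def using D pr by simp
    fix U' assume "U' \<in> insert U F"
    then show "\<exists>n::int. real D' * v U' = of_int n"
    proof
      assume "U' = U"
      then have "real D' * v U' = of_int (int D * p)" using \<open>real D' = _\<close> pr by simp
      then show ?thesis by blast
    next
      assume "U' \<in> F"
      then obtain n where "real D * v U' = of_int n" using D by auto
      then have "real D' * v U' = of_int (r * n)" using \<open>real D' = _\<close> by (simp add: algebra_simps)
      then show ?thesis by blast
    qed
  qed
qed

lemma upper:
  fixes V :: "'a set"
  assumes g: "good V A F" and fV: "finite V" and lp: "lpf F (CV V) v" and rat: "\<forall>U. v U \<in> \<rat>" and AV: "A \<subseteq> V \<times> V"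
  shows "\<exists>D>0. real (bfold_oriented_chromatic_number V A D) \<le> real D * sum v F"
proof -
  have fF: "finite F" using g fV unfolding good_def by (meson finite_Pow_iff finite_subset)
  obtain D :: nat where D: "0 < D" "\<forall>U\<in>F. \<exists>n::int. real D * v U = of_int n"
    using common_denom[OF fF] rat by blast
  have vnn: "\<forall>U\<in>F. 0 \<le> v U" using lp unfolding lpf_def by auto
  define m where "m U = nat \<lfloor>real D * v U\<rfloor>" for U
  have rm: "real (m U) = real D * v U" if UF: "U \<in> F" for U
  proof -
    obtain n where n: "real D * v U = of_int n" using D UF by auto
    have "0 \<le> real D * v U" using vnn that by simp
    then show ?thesis unfolding m_def n using n by simp
  qed
  define S where "S = Sigma F (\<lambda>U. {..<m U})"
  define Cx where "Cx x = Sigma {U\<in>F. x\<in>U} (\<lambda>U. {..<m U})" for x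
  have fS: "finite S" unfolding S_def using fF by auto
  have cS: "real (card S) = real D * sum v F"
  proof -
    have "card S = (\<Sum>U\<in>F. m U)" unfolding S_def using fF by simp
    then have "real (card S) = (\<Sum>U\<in>F. real (m U))" by simp
    also have "\<dots> = (\<Sum>U\<in>F. real D * v U)" using rm by (auto intro: sum.cong)
    finally show ?thesis by (simp add: sum_distrib_left)
  qed
  have cCx: "D \<le> card (Cx x)" if x: "x \<in> V" for x
  proof -
    have ff: "finite {U\<in>F. x\<in>U}" using fF by auto
    have "card (Cx x) = (\<Sum>U\<in>{U\<in>F. x\<in>U}. m U)" unfolding Cx_def using ff by simp
    then have "real (card (Cx x)) = (\<Sum>U\<in>{U\<in>F. x\<in>U}. real (m U))" by simp
    also have "\<dots> = (\<Sum>U\<in>{U\<in>F. x\<in>U}. real D * v U)" using rm by (auto intro: sum.cong)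
    also have "\<dots> = real D * sum v {U\<in>F. x\<in>U}" by (simp add: sum_distrib_left)
    finally have e: "real (card (Cx x)) = real D * sum v {U\<in>F. x\<in>U}" .
    have "(\<lambda>U. if x \<in> U then 1 else 0, 1) \<in> CV V" unfolding CV_def using x by auto
    then have "1 \<le> lin F (\<lambda>U. if x \<in> U then 1 else 0) v" using lp unfolding lpf_def by fastforce
    then have "1 \<le> sum v {U\<in>F. x\<in>U}" using lin_CV[OF fF] by simp
    then have "real D \<le> real (card (Cx x))" unfolding e using D(1)
      by (metis mult.right_neutral mult_left_mono of_nat_0_le_iff)
    then show ?thesis by simp
  qed
  define f where "f x = (SOME T. T \<subseteq> Cx x \<and> card T = D)" for x
  have f: "f x \<subseteq> Cx x \<and> card (f x) = D" if xV: "x \<in> V" for x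
  proof -
    obtain T where "T \<subseteq> Cx x" "card T = D" using obtain_subset_with_card_n[OF cCx[OF xV]] by blast
    then have "\<exists>T. T \<subseteq> Cx x \<and> card T = D" by blast
    then show ?thesis unfolding f_def by (rule someI_ex)
  qed
  have mem: "x \<in> U \<and> U \<in> F" if "x \<in> V" "(U,k) \<in> f x" for x U k
    using f[OF that(1)] that(2) unfolding Cx_def by auto
  have cmp: "\<And>U U'. U \<in> F \<Longrightarrow> U' \<in> F \<Longrightarrow> comp A U U'" using g unfolding good_def by auto
  have col: "bfold_oriented_coloring V A D S f"
    unfolding bfold_oriented_coloring_def
  proof (intro conjI allI impI ballI)
    fix x assume x: "x \<in> V"
    show "f x \<subseteq> S" using f[OF x] unfolding Cx_def S_def by auto
    show "card (f x) = D" using f[OF x] by simp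
  next
    fix x y assume a: "(x,y) \<in> A"
    then have v: "x \<in> V" "y \<in> V" using AV by auto
    show "f x \<inter> f y = {}"
    proof (rule ccontr)
      assume "f x \<inter> f y \<noteq> {}"
      then obtain U k where "(U,k) \<in> f x" "(U,k) \<in> f y" by auto
      then have "x \<in> U" "y \<in> U" "U \<in> F" using mem v by auto
      then show False using cmp[of U U] a unfolding comp_def by blast
    qed
  next
    fix x y z w assume a: "(x,y) \<in> A" "(z,w) \<in> A" "f x \<inter> f w \<noteq> {}"
    then have v: "x \<in> V" "y \<in> V" "z \<in> V" "w \<in> V" using AV by auto
    obtain U k where "(U,k) \<in> f x" "(U,k) \<in> f w" using a(3) by auto
    then have U: "x \<in> U" "w \<in> U" "U \<in> F" using mem v by auto
    show "f y \<inter> f z = {}"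
    proof (rule ccontr)
      assume "f y \<inter> f z \<noteq> {}"
      then obtain U' k' where "(U',k') \<in> f y" "(U',k') \<in> f z" by auto
      then have "y \<in> U'" "z \<in> U'" "U' \<in> F" using mem v by auto
      then show False using cmp[of U U'] U a(1,2) unfolding comp_def by blast
    qed
  qed
  have "bfold_oriented_chromatic_number V A D \<le> card S" using chi_le[OF col fS AV] by blast
  then show ?thesis using cS D(1) by (intro exI[of _ D]) (auto simp: of_nat_le_iff[symmetric])
qed




lemma og_facts:
  assumes "oriented_graph V A"
  shows "finite V" "A \<subseteq> V \<times> V"
  using assms unfolding oriented_graph_def by auto

lemma col_nat:
  assumes og: "oriented_graph V A"
  shows "\<exists>(S::nat set) f. finite S \<and> card S = bfold_oriented_chromatic_number V A b \<and> bfold_oriented_coloring V A b S f"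
proof -
  have "finite (V \<times> {..<b})" using og_facts[OF og] by auto
  then show ?thesis using chi_le[OF col_exists[OF og] _ og_facts(2)[OF og]] by blast
qed

lemma forward_ratio:
  fixes V :: "'a set" and a b :: nat
  assumes og: "oriented_graph V A" and a: "0 < a" and b: "0 < b"
    and le: "fractional_oriented_chromatic_number V A \<le> real a / real b"
  shows "\<exists>D>0. real (bfold_oriented_chromatic_number V A D) \<le> real D * (real a / real b)"
proof (rule ccontr)
  assume nex: "\<not> ?thesis"
  have fV: "finite V" and AV: "A \<subseteq> V \<times> V" using og_facts[OF og] by auto
  define G where "G = {F. good V A F \<and> (\<exists>w. lpf F (CV V) w)}"
  have fG: "finite G"
  proof -
    have "G \<subseteq> Pow (Pow V)" unfolding G_def good_def by auto
    moreover have "finite (Pow (Pow V))" using fV by simp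
    ultimately show ?thesis by (rule finite_subset)
  qed
  have fF: "finite F" if "F \<in> G" for F
  proof -
    have "F \<subseteq> Pow V" using that unfolding G_def good_def by auto
    moreover have "finite (Pow V)" using fV by simp
    ultimately show ?thesis by (rule finite_subset)
  qed
  have fC: "finite (CV V)" unfolding CV_def using fV by simp
  define opt where "opt F = (SOME v. lpf F (CV V) v \<and> (\<forall>i. v i \<in> \<rat>) \<and> (\<forall>w. lpf F (CV V) w \<longrightarrow> sum v F \<le> sum w F))" for F
  have opt: "lpf F (CV V) (opt F) \<and> (\<forall>i. opt F i \<in> \<rat>) \<and> (\<forall>w. lpf F (CV V) w \<longrightarrow> sum (opt F) F \<le> sum w F)"
    if FG: "F \<in> G" for F
  proof -
    obtain w where "lpf F (CV V) w" using FG unfolding G_def by auto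
    then have "\<exists>v. lpf F (CV V) v \<and> (\<forall>i. v i \<in> \<rat>) \<and> (\<forall>w. lpf F (CV V) w \<longrightarrow> sum v F \<le> sum w F)"
      using lp_main[OF fF[OF FG] fC CV_rat] by blast
    then show ?thesis unfolding opt_def by (rule someI_ex)
  qed
  define val where "val F = sum (opt F) F" for F
  have big: "real a / real b < val F" if FG: "F \<in> G" for F
  proof (rule ccontr)
    assume "\<not> ?thesis"
    then have vle: "val F \<le> real a / real b" by simp
    have gF: "good V A F" using FG unfolding G_def by auto
    obtain D where D: "D > 0" "real (bfold_oriented_chromatic_number V A D) \<le> real D * sum (opt F) F"
      using upper[OF gF fV _ _ AV] opt[OF FG] by blast
    have "real D * sum (opt F) F \<le> real D * (real a / real b)"
      using vle unfolding val_def by (intro mult_left_mono) auto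
    then have "real (bfold_oriented_chromatic_number V A D) \<le> real D * (real a / real b)"
      using D(2) by linarith
    then show False using nex D(1) by blast
  qed
  have chi_ge: "\<exists>F\<in>G. val F \<le> real (bfold_oriented_chromatic_number V A b') / real b'" if b': "0 < b'" for b'
  proof -
    obtain S :: "nat set" and f where S: "finite S" "card S = bfold_oriented_chromatic_number V A b'"
      "bfold_oriented_coloring V A b' S f" using col_nat[OF og] by blast
    obtain F w where Fw: "good V A F" "lpf F (CV V) w" "sum w F = real (card S) / real b'"
      using lower[OF S(3) S(1) fV b'] by blast
    have FG: "F \<in> G" unfolding G_def using Fw by auto
    have "val F \<le> sum w F" using opt[OF FG] Fw(2) unfolding val_def by blast
    then show ?thesis using FG Fw(3) S(2) by auto
  qed
  have neG: "G \<noteq> {}" using chi_ge[of 1] by auto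
  define \<mu> where "\<mu> = Min (val ` G)"
  have mu_big: "real a / real b < \<mu>"
  proof -
    have "\<mu> \<in> val ` G" unfolding \<mu>_def using fG neG by (intro Min_in) auto
    then show ?thesis using big by auto
  qed
  have mu_le: "\<mu> \<le> val F" if "F \<in> G" for F unfolding \<mu>_def using fG that by (intro Min_le) auto
  have "\<mu> \<le> fractional_oriented_chromatic_number V A"
    unfolding fractional_oriented_chromatic_number_def
  proof (rule cINF_greatest)
    show "{b::nat. 1 \<le> b} \<noteq> {}" by auto
    fix b' :: nat assume "b' \<in> {b. 1 \<le> b}"
    then have "0 < b'" by auto
    then obtain F where "F \<in> G" "val F \<le> real (bfold_oriented_chromatic_number V A b') / real b'"
      using chi_ge by blast
    then show "\<mu> \<le> real (bfold_oriented_chromatic_number V A b') / real b'" using mu_le by force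
  qed
  then show False using le mu_big by linarith
qed




lemma backward:
  fixes V :: "'a set" and a b c :: nat
  assumes og: "oriented_graph V A" and a: "0 < a" and b: "0 < b" and c: "0 < c"
    and K: "consistent_kneser_suborientation (a * c) (b * c) W B" and h: "oriented_hom V A W B h"
  shows "fractional_oriented_chromatic_number V A \<le> real a / real b"
proof -
  have fV: "finite V" and AV: "A \<subseteq> V \<times> V" using og_facts[OF og] by auto
  have col: "bfold_oriented_coloring V A (b * c) {..<a * c} h"
    unfolding bfold_oriented_coloring_def
  proof (intro conjI allI impI ballI)
    fix x assume x: "x \<in> V"
    then have "h x \<in> W" using h unfolding oriented_hom_def by auto
    then show "h x \<subseteq> {..<a * c}" "card (h x) = b * c" using K unfolding consistent_kneser_suborientation_def by auto
  next
    fix x y assume "(x,y) \<in> A"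
    then have "(h x, h y) \<in> B" using h unfolding oriented_hom_def by auto
    then show "h x \<inter> h y = {}" using K unfolding consistent_kneser_suborientation_def by auto
  next
    fix x y z w assume a: "(x,y) \<in> A" "(z,w) \<in> A" "h x \<inter> h w \<noteq> {}"
    then have "(h x, h y) \<in> B" "(h z, h w) \<in> B" using h unfolding oriented_hom_def by auto
    then show "h y \<inter> h z = {}" using K a(3) unfolding consistent_kneser_suborientation_def by blast
  qed
  have chi: "bfold_oriented_chromatic_number V A (b * c) \<le> a * c"
    using chi_le[OF col _ AV] by simp
  have "fractional_oriented_chromatic_number V A \<le> real (bfold_oriented_chromatic_number V A (b * c)) / real (b * c)"
    unfolding fractional_oriented_chromatic_number_def
  proof (rule cINF_lower)
    show "bdd_below ((\<lambda>b. real (bfold_oriented_chromatic_number V A b) / real b) ` {b. 1 \<le> b})"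
      by (rule bdd_belowI[of _ 0]) auto
    show "b * c \<in> {b. 1 \<le> b}" using b c by simp
  qed
  also have "\<dots> \<le> real (a * c) / real (b * c)"
  proof (rule divide_right_mono)
    show "real (bfold_oriented_chromatic_number V A (b * c)) \<le> real (a * c)" using chi by (simp only: of_nat_le_iff)
  qed simp
  also have "\<dots> = real a / real b" using c by simp
  finally show ?thesis .
qed

lemma forward:
  fixes V :: "'a set" and a b :: nat
  assumes og: "oriented_graph V A" and a: "0 < a" and b: "0 < b"
    and le: "fractional_oriented_chromatic_number V A \<le> real a / real b"
  shows "\<exists>c::nat. 0 < c \<and> (\<exists>W B h. consistent_kneser_suborientation (a * c) (b * c) W B \<and> oriented_hom V A W B h)"
proof -
  have fV: "finite V" and AV: "A \<subseteq> V \<times> V" using og_facts[OF og] by auto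
  obtain D where D: "D > 0" "real (bfold_oriented_chromatic_number V A D) \<le> real D * (real a / real b)"
    using forward_ratio[OF og a b le] by blast
  define k where "k = bfold_oriented_chromatic_number V A D"
  obtain S :: "nat set" and g where S: "finite S" "card S = k" "bfold_oriented_coloring V A D S g"
    using col_nat[OF og] unfolding k_def by blast
  have "real k * real b \<le> real D * real a" using D(2) b unfolding k_def by (simp add: field_simps)
  then have kb: "k * b \<le> a * D" by (metis of_nat_le_iff of_nat_mult mult.commute)
  define P where "P = S \<times> {..<b}"
  have fP: "finite P" "card P = k * b" unfolding P_def using S by (auto simp: card_cartesian_product)
  obtain \<phi> where \<phi>: "bij_betw \<phi> P {0..<card P}" using ex_bij_betw_finite_nat[OF fP(1)] by blast
  have inj: "inj_on \<phi> P" and imP: "\<phi> ` P = {0..<k * b}" using \<phi> fP unfolding bij_betw_def by auto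
  have gS: "g x \<subseteq> S" and cg: "card (g x) = D" if "x \<in> V" for x
    using S(3) that unfolding bfold_oriented_coloring_def by auto
  define h where "h x = \<phi> ` (g x \<times> {..<b})" for x
  have sub: "g x \<times> {..<b} \<subseteq> P" if "x \<in> V" for x using gS[OF that] unfolding P_def by auto
  have hsub: "h x \<subseteq> {..<a * D}" if "x \<in> V" for x
  proof -
    have "h x \<subseteq> \<phi> ` P" unfolding h_def using sub[OF that] by (rule image_mono)
    also have "\<dots> = {0..<k * b}" by (rule imP)
    also have "\<dots> \<subseteq> {..<a * D}" using kb by auto
    finally show ?thesis .
  qed
  have hcard: "card (h x) = b * D" if "x \<in> V" for x
    unfolding h_def using card_image[OF inj_on_subset[OF inj sub[OF that]]] cg[OF that]
    by (simp add: card_cartesian_product)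
  have hne: "h x \<noteq> {}" if "x \<in> V" for x
  proof
    assume "h x = {}" then have "card (h x) = 0" by simp
    then show False using hcard[OF that] b D(1) by simp
  qed
  have hint: "h x \<inter> h y = {} \<longleftrightarrow> g x \<inter> g y = {}" if "x \<in> V" "y \<in> V" for x y
  proof -
    have "h x \<inter> h y = \<phi> ` ((g x \<times> {..<b}) \<inter> (g y \<times> {..<b}))"
      unfolding h_def using inj_on_image_Int[OF inj sub[OF that(1)] sub[OF that(2)]] by simp
    also have "\<dots> = \<phi> ` ((g x \<inter> g y) \<times> {..<b})" by auto
    finally show ?thesis using b by auto
  qed
  define W where "W = h ` V"
  define B where "B = (\<lambda>(x,y). (h x, h y)) ` A"
  have Bcons: "\<forall>x y w z. (x, y) \<in> B \<longrightarrow> (w, z) \<in> B \<longrightarrow> x \<inter> z \<noteq> {} \<longrightarrow> y \<inter> w = {}"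
  proof (intro allI impI)
    fix P1 Q1 P2 Q2 assume "(P1,Q1) \<in> B" "(P2,Q2) \<in> B" and ne: "P1 \<inter> Q2 \<noteq> {}"
    then obtain x1 y1 x2 y2 where e: "(x1,y1) \<in> A" "(x2,y2) \<in> A" "P1 = h x1" "Q1 = h y1" "P2 = h x2" "Q2 = h y2"
      unfolding B_def by auto
    then have v: "x1 \<in> V" "y1 \<in> V" "x2 \<in> V" "y2 \<in> V" using AV by auto
    have "g x1 \<inter> g y2 \<noteq> {}" using ne e hint v by auto
    then have "g y1 \<inter> g x2 = {}" using S(3) e(1,2) unfolding bfold_oriented_coloring_def by blast
    then show "Q1 \<inter> P2 = {}" using e hint v by auto
  qed
  have Bdisj: "\<forall>x y. (x, y) \<in> B \<longrightarrow> x \<inter> y = {}"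
  proof (intro allI impI)
    fix P Q assume "(P,Q) \<in> B"
    then obtain x y where e: "(x,y) \<in> A" "P = h x" "Q = h y" unfolding B_def by auto
    then have "x \<in> V" "y \<in> V" using AV by auto
    then show "P \<inter> Q = {}" using e hint S(3) unfolding bfold_oriented_coloring_def by auto
  qed
  have BW: "B \<subseteq> W \<times> W" unfolding B_def W_def using AV by auto
  have Wne: "P \<noteq> {}" if "P \<in> W" for P using that hne unfolding W_def by auto
  have og2: "oriented_graph W B"
    unfolding oriented_graph_def
  proof (intro conjI allI impI)
    show "finite W" unfolding W_def using fV by simp
    show "B \<subseteq> W \<times> W" by (rule BW)
  next
    fix P show "(P, P) \<notin> B"
    proof
      assume "(P,P) \<in> B"
      then have "P \<inter> P = {}" "P \<in> W" using Bdisj BW by auto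
      then show False using Wne by auto
    qed
  next
    fix P Q assume "(P,Q) \<in> B"
    show "(Q, P) \<notin> B"
    proof
      assume "(Q,P) \<in> B"
      have "P \<in> W" using \<open>(P,Q) \<in> B\<close> BW by auto
      then have "P \<inter> P \<noteq> {}" using Wne by auto
      then have "Q \<inter> Q = {}" using Bcons \<open>(P,Q) \<in> B\<close> \<open>(Q,P) \<in> B\<close> by blast
      moreover have "Q \<in> W" using \<open>(P,Q) \<in> B\<close> BW by auto
      ultimately show False using Wne by auto
    qed
  qed
  have K: "consistent_kneser_suborientation (a * D) (b * D) W B"
    unfolding consistent_kneser_suborientation_def
  proof (intro conjI)
    show "W \<subseteq> {s. s \<subseteq> {..<a * D} \<and> card s = b * D}"
    proof
      fix P assume "P \<in> W"
      then obtain x where "x \<in> V" "P = h x" unfolding W_def by auto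
      then show "P \<in> {s. s \<subseteq> {..<a * D} \<and> card s = b * D}" using hsub hcard by auto
    qed
  qed (use og2 Bdisj Bcons in auto)
  have H: "oriented_hom V A W B h"
    unfolding oriented_hom_def W_def B_def by auto
  show ?thesis using K H D(1) by blast
qed

theorem theorem1:
  fixes V :: "'a set" and A :: "('a \<times> 'a) set" and a b :: nat
  assumes "oriented_graph V A" and "0 < a" and "0 < b"
  shows "fractional_oriented_chromatic_number V A \<le> real a / real b \<longleftrightarrow>
    (\<exists>c::nat. 0 < c \<and> (\<exists>W B h. consistent_kneser_suborientation (a * c) (b * c) W B
                                  \<and> oriented_hom V A W B h))"
  using forward[OF assms] backward[OF assms] by blast


end
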